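(* Let $c,d>0$, $g(x)=xF(c,d;c+d;x)$ for $x\in(0,1)$, let $0<a<1<b$, and set $\varphi(y)=\max\{y^a,y^b\}$ and $\varphi^{-1}(y)=\min\{y^{1/a},y^{1/b}\}$ for $y>0$. Let $\beta\in(0,1)$ be the unique solution of $$g\!\left(\frac{\varphi^{-1}(x/(1-x))}{1+\varphi^{-1}(x/(1-x))}\right)=1.$$ Put $a_0=\frac{cd}{c+d}$, $h=\frac{a_0^2}{c+d+1}$, $c_0=1-\frac{1}{2\log 2}$, $c_1=\frac{1}{\log 2}-1$. Then (1) if $(a_0-1)/h\le c_0$, then $\beta>1/2$; (2) if $(a_0-1)/h\ge c_1$, then $\beta<1/2$.
   Context: $F(a,b;c;x)$ is the Gaussian hypergeometric function $\sum_{n\ge0}\frac{(a)_n(b)_n}{(c)_n}\frac{x^n}{n!}$ ($|x|<1$), with $(a)_n=a(a+1)\cdots(a+n-1)$, $(a)_0=1$. *)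

theory Defs
  imports Complex_Main
begin

text \<open>Gaussian hypergeometric function F(a,b;c;x), as a power series (meant for |x| < 1).\<close>
definition hyp2F1 :: "real \<Rightarrow> real \<Rightarrow> real \<Rightarrow> real \<Rightarrow> real" where
  "hyp2F1 a b c x =
     (\<Sum>n. pochhammer a n * pochhammer b n / pochhammer c n * x ^ n / fact n)"

definition gfun :: "real \<Rightarrow> real \<Rightarrow> real \<Rightarrow> real" where
  "gfun c d x = x * hyp2F1 c d (c + d) x"

definition phi :: "real \<Rightarrow> real \<Rightarrow> real \<Rightarrow> real" where
  "phi a b y = max (y powr a) (y powr b)"

definition phi_inv :: "real \<Rightarrow> real \<Rightarrow> real \<Rightarrow> real" where
  "phi_inv a b y = min (y powr (1 / a)) (y powr (1 / b))"

definition beta_eq :: "real \<Rightarrow> real \<Rightarrow> real \<Rightarrow> real \<Rightarrow> real \<Rightarrow> bool" where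
  "beta_eq c d a b x =
     (let u = phi_inv a b (x / (1 - x)) in gfun c d (u / (1 + u)) = 1)"

end

theory Submission
  imports Defs
begin


fun Kc :: "real \<Rightarrow> real \<Rightarrow> nat \<Rightarrow> real" where
  "Kc a p 0 = 1"
| "Kc a p (Suc n) = Kc a p n * ((real n + a*p/(p + real n)) / (real n + 1))"

lemma Kc_pos: assumes "a > 0" "p > 0" shows "Kc a p n > 0"
proof (induction n)
  case 0 then show ?case by simp
next
  case (Suc n)
  have "a*p/(p + real n) > 0" using assms by simp
  then have "(real n + a*p/(p + real n)) / (real n + 1) > 0" by (simp add: add_nonneg_pos)
  from mult_pos_pos[OF Suc this] show ?case by (simp del: times_divide_eq_right)
qed

lemma coef_eq:
  fixes c d :: real assumes "c > 0" "d > 0"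
  shows "pochhammer c n * pochhammer d n / pochhammer (c+d) n / fact n = Kc (c*d/(c+d)) (c+d) n"
proof (induction n)
  case 0 then show ?case by simp
next
  case (Suc n)
  have pp: "pochhammer (c+d) n > 0" using assms by (intro pochhammer_pos) simp
  have fp: "(fact n::real) > 0" by simp
  have e1: "(c + real n) * (d + real n) / ((c + d + real n) * (real n + 1))
        = (real n + c*d/(c+d)*(c+d)/((c+d) + real n)) / (real n + 1)"
  proof -
    have cd: "c*d/(c+d)*(c+d) = c*d" using assms by simp
    have "(c + real n) * (d + real n) = real n * ((c+d) + real n) + c*d" by (simp add: algebra_simps)
    then show ?thesis unfolding cd using assms by (simp add: field_simps)
  qed
  have "pochhammer c (Suc n) * pochhammer d (Suc n) / pochhammer (c+d) (Suc n) / fact (Suc n)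
      = (pochhammer c n * pochhammer d n / pochhammer (c+d) n / fact n) *
        ((c + real n) * (d + real n) / ((c + d + real n) * (real n + 1)))"
    using pp fp assms by (simp add: pochhammer_Suc field_simps)
  also have "\<dots> = Kc (c*d/(c+d)) (c+d) (Suc n)" using Suc e1 by simp
  finally show ?case .
qed

lemma hyp_eq:
  fixes c d x :: real assumes "c > 0" "d > 0"
  shows "hyp2F1 c d (c+d) x = (\<Sum>n. Kc (c*d/(c+d)) (c+d) n * x^n)"
  unfolding hyp2F1_def
proof (rule arg_cong[where f=suminf], rule ext)
  fix n
  show "pochhammer c n * pochhammer d n / pochhammer (c + d) n * x ^ n / fact n =
         Kc (c * d / (c + d)) (c + d) n * x ^ n"
  proof -
    have "pochhammer c n * pochhammer d n / pochhammer (c + d) n * x ^ n / fact n =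
        (pochhammer c n * pochhammer d n / pochhammer (c + d) n / fact n) * x ^ n" by simp
    then show ?thesis by (simp only: coef_eq[OF assms])
  qed
qed

lemma Kc_summable:
  assumes "a > 0" "p > 0" "0 \<le> z" "z < 1"
  shows "summable (\<lambda>n. Kc a p n * z^n)"
proof (cases "z = 0")
  case True
  then show ?thesis by (simp add: summable_0_powser)
next
  case False
  then have zp: "z > 0" using assms by simp
  define N where "N = nat \<lceil>2*a/(1-z)\<rceil>"
  show ?thesis
  proof (rule summable_ratio_test[where c="(1+z)/2" and N=N])
    show "(1+z)/2 < 1" using assms by simp
    fix n assume "N \<le> n"
    then have nN: "real n \<ge> 2*a/(1-z)" unfolding N_def by linarith
    have f1: "(real n + a*p/(p + real n)) / (real n + 1) \<le> 1 + a/(real n + 1)"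
    proof -
      have "a*p/(p + real n) \<le> a" using assms by (simp add: field_simps mult_left_mono)
      then have "(real n + a*p/(p+real n))/(real n+1) \<le> (real n + 1 + a)/(real n + 1)"
        by (intro divide_right_mono) auto
      also have "\<dots> = 1 + a/(real n+1)" by (simp add: field_simps)
      finally show ?thesis .
    qed
    have f0: "(real n + a*p/(p + real n)) / (real n + 1) \<ge> 0" using assms by simp
    have "z * (1 + a/(real n + 1)) \<le> (1+z)/2"
    proof -
      have "a/(real n + 1) \<le> (1-z)/2"
        using nN assms by (simp add: field_simps)
      then have "z * (a/(real n + 1)) \<le> z*((1-z)/2)" using zp by (intro mult_left_mono) auto
      also have "\<dots> \<le> (1-z)/2" using assms zp by (simp add: mult_le_cancel_right1)
      finally show ?thesis by (simp add: field_simps)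
    qed
    then have fz: "z * ((real n + a*p/(p + real n)) / (real n + 1)) \<le> (1+z)/2"
      using f1 zp by (smt (verit) mult_left_mono)
    have kp: "Kc a p n > 0" using Kc_pos assms by simp
    have "norm (Kc a p (Suc n) * z ^ Suc n) = (Kc a p n * z^n) * (z * ((real n + a*p/(p + real n)) / (real n + 1)))"
      using kp zp f0 assms by (simp add: abs_mult)
    also have "\<dots> \<le> (Kc a p n * z^n) * ((1+z)/2)"
      using fz kp zp by (intro mult_left_mono) auto
    also have "\<dots> = (1+z)/2 * norm (Kc a p n * z^n)" using kp zp by (simp add: abs_mult)
    finally show "norm (Kc a p (Suc n) * z ^ Suc n) \<le> (1+z)/2 * norm (Kc a p n * z^n)" .
  qed
qed

lemma Kc_mono_z:
  assumes "a > 0" "p > 0" "0 \<le> z1" "z1 \<le> z2" "z2 < 1"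
  shows "(\<Sum>n. Kc a p n * z1^n) \<le> (\<Sum>n. Kc a p n * z2^n)"
proof (rule suminf_le)
  fix n show "Kc a p n * z1^n \<le> Kc a p n * z2^n"
    using Kc_pos[OF assms(1,2)] assms by (intro mult_left_mono power_mono) (auto intro: less_imp_le)
qed (use Kc_summable assms in auto)



definition FF :: "real \<Rightarrow> real \<Rightarrow> real \<Rightarrow> real" where
  "FF a p z = (\<Sum>n. Kc a p n * z^n)"

lemma FF_nonneg: assumes "a > 0" "p > 0" "0 \<le> z" "z < 1" shows "FF a p z \<ge> 0"
  unfolding FF_def using Kc_summable[OF assms] Kc_pos[OF assms(1,2)] assms
  by (intro suminf_nonneg) (auto simp: less_imp_le)

lemma gfun_eq: assumes "c > 0" "d > 0"
  shows "gfun c d x = x * FF (c*d/(c+d)) (c+d) x"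
  unfolding gfun_def FF_def hyp_eq[OF assms] ..

lemma phi_inv_pos: assumes "y > 0" shows "phi_inv a b y > 0"
  unfolding phi_inv_def using assms by simp

lemma reduce1:
  fixes c d a b \<beta> :: real
  assumes "c > 0" "d > 0" "0 < a" "0 < b" "\<beta> \<in> {0<..<1}" "beta_eq c d a b \<beta>"
    and F: "FF (c*d/(c+d)) (c+d) (1/2) < 2"
  shows "\<beta> > 1/2"
proof (rule ccontr)
  assume "\<not> \<beta> > 1/2"
  then have b2: "\<beta> \<le> 1/2" by simp
  define y where "y = \<beta>/(1-\<beta>)"
  have y0: "y > 0" and y1: "y \<le> 1" using assms(5) b2 unfolding y_def by (auto simp: field_simps)
  define u where "u = phi_inv a b y"
  have u0: "u > 0" unfolding u_def using phi_inv_pos y0 by simp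
  have u1: "u \<le> 1" unfolding u_def phi_inv_def using y0 y1 assms(3)
    by (simp add: min_le_iff_disj powr_le1)
  define z where "z = u/(1+u)"
  have z0: "z > 0" and z1: "z \<le> 1/2" unfolding z_def using u0 u1 by (auto simp: field_simps)
  define a0 where "a0 = c*d/(c+d)"
  have a0p: "a0 > 0" unfolding a0_def using assms by simp
  have pp: "c + d > 0" using assms by simp
  have "gfun c d z = 1" using assms(6) unfolding beta_eq_def Let_def y_def[symmetric] u_def[symmetric] z_def[symmetric] .
  then have "z * FF a0 (c+d) z = 1" using gfun_eq[OF assms(1,2)] unfolding a0_def by simp
  moreover have "FF a0 (c+d) z \<le> FF a0 (c+d) (1/2)"
    unfolding FF_def using Kc_mono_z[OF a0p pp, of z "1/2"] z0 z1 by simp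
  moreover have "FF a0 (c+d) z \<ge> 0" using FF_nonneg[OF a0p pp, of z] z0 z1 by simp
  ultimately have "1 \<le> (1/2) * FF a0 (c+d) (1/2)"
    by (metis mult_mono z1 less_imp_le[OF z0] order.trans)
  then show False using F unfolding a0_def by simp
qed

lemma reduce2:
  fixes c d a b \<beta> :: real
  assumes "c > 0" "d > 0" "0 < a" "0 < b" "\<beta> \<in> {0<..<1}" "beta_eq c d a b \<beta>"
    and F: "FF (c*d/(c+d)) (c+d) (1/2) > 2"
  shows "\<beta> < 1/2"
proof (rule ccontr)
  assume "\<not> \<beta> < 1/2"
  then have b2: "\<beta> \<ge> 1/2" by simp
  define y where "y = \<beta>/(1-\<beta>)"
  have y1: "y \<ge> 1" using assms(5) b2 unfolding y_def by (auto simp: field_simps)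
  define u where "u = phi_inv a b y"
  have u1: "u \<ge> 1" unfolding u_def phi_inv_def using y1 assms(3,4)
    by (simp add: ge_one_powr_ge_zero)
  define z where "z = u/(1+u)"
  have z0: "z \<ge> 1/2" and z1: "z < 1" unfolding z_def using u1 by (auto simp: field_simps)
  define a0 where "a0 = c*d/(c+d)"
  have a0p: "a0 > 0" unfolding a0_def using assms by simp
  have pp: "c + d > 0" using assms by simp
  have "gfun c d z = 1" using assms(6) unfolding beta_eq_def Let_def y_def[symmetric] u_def[symmetric] z_def[symmetric] .
  then have e: "z * FF a0 (c+d) z = 1" using gfun_eq[OF assms(1,2)] unfolding a0_def by simp
  have m: "FF a0 (c+d) (1/2) \<le> FF a0 (c+d) z"
    unfolding FF_def using Kc_mono_z[OF a0p pp, of "1/2" z] z0 z1 by simp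
  have "(1/2) * FF a0 (c+d) (1/2) \<le> z * FF a0 (c+d) z"
    using m z0 FF_nonneg[OF a0p pp, of "1/2"] by (intro mult_mono) auto
  then show False using F e unfolding a0_def by simp
qed



lemma step2:
  fixes e hh p H x :: real
  assumes e0: "e \<ge> 0" and he: "hh \<ge> e" and h0: "hh > 0" and p0: "p > 0"
    and hp: "hh*(p+1) \<ge> (1+e)^2" and H1: "1 \<le> H" and Hx: "H \<le> x"
    and B0: "1 + e*H - hh*(x - H) \<ge> 0"
  shows "(1 + e*H - hh*(x - H)) * (x + (1+e)*p/(p+x)) \<ge> (x+1)*(1 + e*H - hh*(x - H)) + e - x*hh"
proof -
  define B where "B = 1 + e*H - hh*(x - H)"
  define m where "m = x - H"
  define X where "X = e^2*H + hh*x - e*hh*(x-H)"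
  have m0: "m \<ge> 0" unfolding m_def using Hx by simp
  have x1: "x \<ge> 1" using H1 Hx by simp
  have hm: "hh*m \<le> 1 + e*H" using B0 unfolding m_def by simp
  have X0: "X \<ge> 0"
  proof -
    have "e*(hh*m) \<le> e*(1 + e*H)" using hm e0 by (rule mult_left_mono)
    then have "X \<ge> hh*x - e" unfolding X_def m_def by (simp add: algebra_simps power2_eq_square)
    moreover have "hh*x \<ge> e*1" using he x1 e0 by (intro mult_mono) auto
    ultimately show ?thesis by simp
  qed
  have ident: "B*(e*p - x) - (e - x*hh)*(p+x) = p*X + x*(hh*(2*x - H) - (1+e) - e*H)"
    unfolding B_def X_def by (simp add: algebra_simps power2_eq_square)
  have pX: "p*X \<ge> ((1+e)^2/hh - 1)*X"
  proof -
    have "(1+e)^2/hh \<le> p + 1" using hp h0 by (simp add: divide_le_eq mult.commute)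
    then have "(1+e)^2/hh - 1 \<le> p" by simp
    then show ?thesis using X0 by (rule mult_right_mono)
  qed
  have ident2: "hh*(((1+e)^2/hh - 1)*X + x*(hh*(2*x - H) - (1+e) - e*H))
     = (1+e)^2*e^2*H - e*hh*H*(x-1) + e*hh*m*(hh - e - e^2) + x*hh^2*(2*x - H - 1)"
    unfolding X_def m_def using h0 by (simp add: field_simps power2_eq_square)
  have i1: "x*hh^2*(2*x - H - 1) - e*hh*H*(x-1) \<ge> e*hh*(2*x-1)*m"
  proof -
    have q0: "x*(2*x - H - 1) \<ge> 0" using x1 Hx by simp
    have "x*hh*(2*x-H-1) \<ge> x*e*(2*x-H-1)"
      using mult_right_mono[OF he q0] by (simp add: algebra_simps)
    then have "hh*(x*hh*(2*x-H-1)) \<ge> hh*(x*e*(2*x-H-1))" using h0 by (intro mult_left_mono) auto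
    moreover have "e*hh*(2*x-1)*m = hh*(x*e*(2*x-H-1)) - e*hh*H*(x-1)" unfolding m_def by (simp add: algebra_simps)
    moreover have "x*hh^2*(2*x-H-1) = hh*(x*hh*(2*x-H-1))" by (simp add: power2_eq_square algebra_simps)
    ultimately show ?thesis by linarith
  qed
  have i2: "e*hh*m*(2*x - 1 + hh) \<ge> 0" using e0 h0 m0 x1 by simp
  have i3: "e*hh*m*(e + e^2) \<le> (1+e)^2*e^2*H"
  proof -
    have ee: "e*(e+e^2) \<ge> 0" using e0 by simp
    have "e*hh*m*(e + e^2) = (e*(e+e^2))*(hh*m)" by (simp add: algebra_simps)
    also have "\<dots> \<le> (e*(e+e^2))*(1 + e*H)" using hm ee by (rule mult_left_mono)
    also have "\<dots> \<le> (e*(e+e^2))*((1+e)*H)" using ee H1 e0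
      by (intro mult_left_mono) (auto simp: algebra_simps)
    also have "\<dots> = (1+e)^2*e^2*H" by (simp add: algebra_simps power2_eq_square)
    finally show ?thesis .
  qed
  have "hh*(((1+e)^2/hh - 1)*X + x*(hh*(2*x - H) - (1+e) - e*H)) \<ge> 0"
    unfolding ident2 using i1 i2 i3 by (simp add: algebra_simps) 
  then have "((1+e)^2/hh - 1)*X + x*(hh*(2*x - H) - (1+e) - e*H) \<ge> 0"
    using h0 by (simp add: zero_le_mult_iff)
  then have D0: "B*(e*p - x) - (e - x*hh)*(p+x) \<ge> 0" using ident pX by simp
  have px: "p + x > 0" using p0 x1 by simp
  have fx: "x + (1+e)*p/(p+x) = (x*(p+x) + (1+e)*p)/(p+x)" using px by (simp add: field_simps)
  have "B*(x*(p+x) + (1+e)*p) - ((x+1)*B + e - x*hh)*(p+x) = B*(e*p - x) - (e - x*hh)*(p+x)"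
    by (simp add: algebra_simps)
  then have "((x+1)*B + e - x*hh)*(p+x) \<le> B*(x*(p+x) + (1+e)*p)" using D0 by linarith
  then have "(x+1)*B + e - x*hh \<le> B*(x*(p+x) + (1+e)*p)/(p+x)" using px by (simp add: pos_le_divide_eq)
  then show ?thesis unfolding B_def[symmetric] fx by simp
qed



definition Hn :: "nat \<Rightarrow> real" where "Hn n = (\<Sum>k<n. 1/(real k + 1))"

lemma Hn_0[simp]: "Hn 0 = 0" by (simp add: Hn_def)
lemma Hn_Suc: "Hn (Suc n) = Hn n + 1/(real n + 1)" by (simp add: Hn_def)

lemma Hn_ge1: "n \<ge> 1 \<Longrightarrow> Hn n \<ge> 1"
proof (induction n)
  case 0 then show ?case by simp
next
  case (Suc n)
  then show ?case by (cases "n = 0") (auto simp: Hn_Suc intro: add_increasing2)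
qed

lemma Hn_le: "Hn n \<le> real n"
proof (induction n)
  case 0 then show ?case by simp
next
  case (Suc n)
  have "1/(real n + 1) \<le> 1" by simp
  then show ?case unfolding Hn_Suc of_nat_Suc using Suc.IH by linarith
qed

lemma Hn_nonneg: "Hn n \<ge> 0" unfolding Hn_def by (intro sum_nonneg) auto

definition Bs :: "real \<Rightarrow> real \<Rightarrow> nat \<Rightarrow> real" where
  "Bs e hh n = 1 + e*Hn n - hh*(real n - Hn n)"

lemma Bs_Suc: "Bs e hh (Suc n) = Bs e hh n + (e - real n*hh)/(real n + 1)"
proof -
  have q: "1 - 1/(real n+1) = real n/(real n+1)" by (simp add: field_simps)
  have "Bs e hh (Suc n) = Bs e hh n + e/(real n+1) - hh*(1 - 1/(real n+1))"
    unfolding Bs_def Hn_Suc by (simp add: algebra_simps)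
  also have "\<dots> = Bs e hh n + (e - real n*hh)/(real n + 1)"
    unfolding q by (simp add: diff_divide_distrib)
  finally show ?thesis .
qed

lemma Bs_sum: "Bs e hh n = 1 + (\<Sum>k<n. (e - real k*hh)/(real k + 1))"
proof (induction n)
  case 0 then show ?case by (simp add: Bs_def)
next
  case (Suc n) then show ?case by (simp add: Bs_Suc)
qed

lemma Bs_ge1: assumes "e > real n * hh" "hh \<ge> 0" shows "Bs e hh n \<ge> 1"
proof -
  have "(\<Sum>k<n. (e - real k*hh)/(real k + 1)) \<ge> 0"
  proof (intro sum_nonneg)
    fix k assume "k \<in> {..<n}"
    then have "real k * hh \<le> real n * hh" using assms by (intro mult_right_mono) auto
    then show "(e - real k*hh)/(real k + 1) \<ge> 0" using assms by simp
  qed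
  then show ?thesis unfolding Bs_sum by simp
qed

lemma K_ge_B:
  assumes a1: "a \<ge> 1" and p0: "p > 0" and h0: "hh > 0" and he: "hh \<ge> a - 1"
    and hp: "hh*(p+1) \<ge> a^2"
  shows "Kc a p n \<ge> Bs (a-1) hh n"
proof (induction n)
  case 0 then show ?case by (simp add: Bs_def)
next
  case (Suc n)
  define f where "f = (real n + a*p/(p + real n)) / (real n + 1)"
  have f0: "f > 0" unfolding f_def using a1 p0 by (simp add: add_nonneg_pos)
  have KS: "Kc a p (Suc n) = Kc a p n * f" by (simp add: f_def)
  show ?case
  proof (cases "Bs (a-1) hh n \<ge> 0")
    case True
    have st: "Bs (a-1) hh n * f \<ge> Bs (a-1) hh (Suc n)"
    proof (cases "n = 0")
      case True
      then show ?thesis using p0 by (simp add: f_def Bs_def Hn_Suc)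
    next
      case False
      have H1: "1 \<le> Hn n" using False Hn_ge1 by simp
      have s: "(1 + (a-1)*Hn n - hh*(real n - Hn n)) * (real n + (1+(a-1))*p/(p+real n))
          \<ge> (real n+1)*(1 + (a-1)*Hn n - hh*(real n - Hn n)) + (a-1) - real n*hh"
        using step2[of "a-1" hh p "Hn n" "real n"] a1 he h0 p0 hp H1 Hn_le[of n] True
        by (simp add: Bs_def)
      have "Bs (a-1) hh n * f = (1 + (a-1)*Hn n - hh*(real n - Hn n)) * (real n + (1+(a-1))*p/(p+real n)) / (real n + 1)"
        unfolding f_def Bs_def by simp
      also have "\<dots> \<ge> ((real n+1)*(1 + (a-1)*Hn n - hh*(real n - Hn n)) + (a-1) - real n*hh) / (real n + 1)"
        using s by (intro divide_right_mono) auto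
      finally show ?thesis unfolding Bs_Suc by (simp add: Bs_def field_simps)
    qed
    have "Bs (a-1) hh n * f \<le> Kc a p n * f" using Suc f0 by (intro mult_right_mono) auto
    then show ?thesis using st KS by simp
  next
    case False
    have "Bs (a-1) hh (Suc n) < 0"
    proof (cases "a - 1 > real n * hh")
      case True
      then have "Bs (a-1) hh n \<ge> 1" using Bs_ge1 h0 by simp
      then show ?thesis using False by simp
    next
      case c2: False
      then have "(a - 1 - real n*hh)/(real n + 1) \<le> 0" by (simp add: divide_nonpos_pos)
      then show ?thesis using False unfolding Bs_Suc by simp
    qed
    moreover have "Kc a p (Suc n) > 0" using Kc_pos[of a p "Suc n"] a1 p0 by linarith
    ultimately show ?thesis by simp
  qed
qed



lemma geo_half: "(\<lambda>n. (1/2::real)^n) sums 2"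
  using geometric_sums[of "1/2::real"] by simp

lemma lnser_summable: "summable (\<lambda>n. (1/2::real)^(Suc n) / real (Suc n))"
proof (rule summable_comparison_test[where g="\<lambda>n. (1/2::real)^n"])
  show "\<exists>N. \<forall>n\<ge>N. norm ((1/2::real)^(Suc n) / real (Suc n)) \<le> (1/2)^n"
  proof (intro exI allI impI)
    fix n :: nat
    have "(1/2::real)^(Suc n) / real (Suc n) \<le> (1/2)^(Suc n) / 1" by (intro divide_left_mono) auto
    also have "\<dots> \<le> (1/2)^n" by simp
    finally show "norm ((1/2::real)^(Suc n) / real (Suc n)) \<le> (1/2)^n" by simp
  qed
  show "summable (\<lambda>n. (1/2::real)^n)" using geo_half by (rule sums_summable)
qed

lemma ln2_sums: "(\<lambda>n. (1/2::real)^(Suc n) / real (Suc n)) sums ln 2"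
proof -
  have "ln (1/2::real) = (\<Sum>n. (-1)^n * (1 / real (n + 1)) * (1/2 - 1)^(Suc n))"
    by (rule ln_series) auto
  also have "\<dots> = (\<Sum>n. - ((1/2::real)^(Suc n) / real (Suc n)))"
  proof (rule arg_cong[where f=suminf], rule ext)
    fix n
    have q: "(1/2 - 1::real) = (-1) * (1/2)" by simp
    have m1: "(-1::real)^n * (-1)^n = 1" by (simp add: power_mult_distrib[symmetric])
    have "(-1)^n * (1 / real (n + 1)) * (1/2 - 1::real)^(Suc n)
        = ((-1::real)^n * (-1)^n) * (-1) * ((1/2)^(Suc n) / real (Suc n))"
      unfolding q power_mult_distrib by (simp add: algebra_simps)
    then show "(-1)^n * (1 / real (n + 1)) * (1/2 - 1::real)^(Suc n) = - ((1/2::real)^(Suc n) / real (Suc n))"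
      unfolding m1 by simp
  qed
  also have "\<dots> = - (\<Sum>n. (1/2::real)^(Suc n) / real (Suc n))"
    using lnser_summable by (rule suminf_minus)
  finally have "(\<Sum>n. (1/2::real)^(Suc n) / real (Suc n)) = ln 2"
    by (simp add: ln_div)
  then show ?thesis using lnser_summable by (metis summable_sums)
qed

definition la :: "nat \<Rightarrow> real" where "la i = (if i = 0 then 0 else (1/2)^i / real i)"

lemma la_sums: "la sums ln 2"
proof -
  have eq: "(\<lambda>n. la (Suc n)) = (\<lambda>n. (1/2::real)^(Suc n) / real (Suc n))"
    by (rule ext) (simp only: la_def, simp)
  have "(\<lambda>n. la (Suc n)) sums ln 2" unfolding eq by (rule ln2_sums)
  then have "la sums (ln 2 + la 0)" by (simp only: sums_Suc_iff)
  then show ?thesis by (simp add: la_def)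
qed

lemma Hn_alt: "Hn k = (\<Sum>i\<in>{1..k}. 1/real i)"
proof (induction k)
  case 0 then show ?case by simp
next
  case (Suc k) then show ?case by (simp add: Hn_Suc add.commute)
qed

lemma conv_la: "(\<Sum>i\<le>k. la i * (1/2::real)^(k - i)) = Hn k * (1/2)^k"
proof -
  have "(\<Sum>i\<le>k. la i * (1/2::real)^(k - i)) = (\<Sum>i\<in>{1..k}. la i * (1/2::real)^(k - i))"
  proof -
    have "{..k} = insert 0 {1..k}" by auto
    then show ?thesis by (simp add: la_def)
  qed
  also have "\<dots> = (\<Sum>i\<in>{1..k}. (1/real i) * (1/2::real)^k)"
  proof (rule sum.cong)
    fix i assume "i \<in> {1..k}"
    then have "(1/2::real)^i * (1/2)^(k-i) = (1/2)^k" by (simp add: power_add[symmetric])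
    then show "la i * (1/2::real)^(k - i) = (1/real i) * (1/2)^k"
      using \<open>i \<in> {1..k}\<close> unfolding la_def by (simp add: field_simps)
  qed simp
  also have "\<dots> = Hn k * (1/2)^k" unfolding Hn_alt by (simp add: sum_distrib_right)
  finally show ?thesis .
qed

lemma Hn_sums: "(\<lambda>n. Hn n * (1/2::real)^n) sums (2 * ln 2)"
proof -
  have nl: "(\<lambda>k. norm (la k)) = la" by (auto simp: la_def)
  have s1: "summable (\<lambda>k. norm (la k))" unfolding nl using la_sums by (rule sums_summable)
  have s2: "summable (\<lambda>k. norm ((1/2::real)^k))" using geo_half by (simp add: sums_summable)
  have "(\<lambda>k. \<Sum>i\<le>k. la i * (1/2::real)^(k - i)) sums ((\<Sum>k. la k) * (\<Sum>k. (1/2::real)^k))"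
    by (rule Cauchy_product_sums[OF s1 s2])
  moreover have "(\<Sum>k. la k) = ln 2" using la_sums by (simp add: sums_iff)
  moreover have "(\<Sum>k. (1/2::real)^k) = 2" using geo_half by (simp add: sums_iff)
  ultimately show ?thesis unfolding conv_la by (simp add: mult.commute)
qed

lemma n_sums: "(\<lambda>n. real n * (1/2::real)^n) sums 2"
proof -
  have s2: "summable (\<lambda>k. norm ((1/2::real)^k))" using geo_half by (simp add: sums_summable)
  have "(\<lambda>k. \<Sum>i\<le>k. (1/2::real)^i * (1/2::real)^(k - i)) sums ((\<Sum>k. (1/2::real)^k) * (\<Sum>k. (1/2::real)^k))"
    by (rule Cauchy_product_sums[OF s2 s2])
  moreover have "(\<Sum>k. (1/2::real)^k) = 2" using geo_half by (simp add: sums_iff)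
  moreover have "(\<Sum>i\<le>k. (1/2::real)^i * (1/2::real)^(k - i)) = (real k + 1) * (1/2)^k" for k
  proof -
    have "(\<Sum>i\<le>k. (1/2::real)^i * (1/2::real)^(k - i)) = (\<Sum>i\<le>k. (1/2::real)^k)"
      by (rule sum.cong) (auto simp: power_add[symmetric])
    then show ?thesis by simp
  qed
  ultimately have "(\<lambda>k. (real k + 1) * (1/2::real)^k) sums 4" by simp
  from sums_diff[OF this geo_half] show ?thesis by (simp add: algebra_simps)
qed



lemma ln2_lower: "ln (2::real) \<ge> 5/8"
proof -
  have "(\<Sum>i<2. (1/2::real)^(Suc i) / real (Suc i)) \<le> (\<Sum>i. (1/2::real)^(Suc i) / real (Suc i))"
    by (rule sum_le_suminf[OF lnser_summable]) auto
  moreover have "(\<Sum>i. (1/2::real)^(Suc i) / real (Suc i)) = ln 2" using ln2_sums by (simp add: sums_iff)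
  ultimately show ?thesis by (simp add: numeral_2_eq_2)
qed

lemma ln2_upper: "ln (2::real) \<le> 69324/100000"
proof -
  define f where "f = (\<lambda>i. (1/2::real)^(Suc i) / real (Suc i))"
  have sf: "summable f" unfolding f_def by (rule lnser_summable)
  have "ln 2 = suminf f" using ln2_sums unfolding f_def by (simp add: sums_iff)
  also have "\<dots> = (\<Sum>n. f (n + 10)) + (\<Sum>i<10. f i)" by (rule suminf_split_initial_segment[OF sf])
  also have "(\<Sum>n. f (n + 10)) \<le> (\<Sum>n. (1/2::real)^(n+11) / 11)"
  proof (rule suminf_le)
    fix n
    have "f (n+10) = (1/2::real)^(n+11) / real (n + 11)" unfolding f_def by (simp add: ac_simps)
    also have "\<dots> \<le> (1/2::real)^(n+11) / 11" by (intro divide_left_mono) auto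
    finally show "f (n+10) \<le> (1/2::real)^(n+11) / 11" .
  next
    show "summable (\<lambda>n. f (n + 10))" using sf by (rule summable_ignore_initial_segment)
  next
    have "(\<lambda>n. (1/2::real)^n * ((1/2)^11/11)) sums (2 * ((1/2)^11/11))" by (rule sums_mult2[OF geo_half])
    moreover have "(\<lambda>n. (1/2::real)^(n+11) / 11) = (\<lambda>n. (1/2::real)^n * ((1/2)^11/11))"
      by (rule ext) (simp add: power_add)
    ultimately show "summable (\<lambda>n. (1/2::real)^(n+11) / 11)" using sums_summable by metis
  qed
  also have "(\<Sum>n. (1/2::real)^(n+11) / 11) = 2 * ((1/2)^11/11)"
  proof -
    have "(\<lambda>n. (1/2::real)^n * ((1/2)^11/11)) sums (2 * ((1/2)^11/11))" by (rule sums_mult2[OF geo_half])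
    then show ?thesis by (simp add: sums_iff power_add)
  qed
  finally have "ln 2 \<le> 2 * ((1/2::real)^11/11) + (\<Sum>i<10. f i)" by simp
  also have "\<dots> \<le> 69324/100000" unfolding f_def by (simp add: eval_nat_numeral)
  finally show ?thesis .
qed


lemma case2:
  fixes c d :: real assumes c0: "c > 0" and d0: "d > 0"
    and hyp: "(c*d/(c+d) - 1) / ((c*d/(c+d))^2/(c+d+1)) \<ge> 1/ln 2 - 1"
  shows "FF (c*d/(c+d)) (c+d) (1/2) > 2"
proof -
  define a where "a = c*d/(c+d)"
  define p where "p = c+d"
  define h where "h = a^2/(p+1)"
  define e where "e = a - 1"
  have a0: "a > 0" and p0: "p > 0" unfolding a_def p_def using c0 d0 by auto
  have h0: "h > 0" unfolding h_def using a0 p0 by simp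
  have l0: "ln (2::real) > 0" and l1: "ln (2::real) < 1" using ln_2_less_1 by auto
  have c1: "1/ln 2 - 1 > (0::real)" using l0 l1 by (simp add: field_simps)
  have "e/h \<ge> 1/ln 2 - 1" using hyp unfolding e_def h_def a_def p_def by simp
  then have eh: "e \<ge> (1/ln 2 - 1)*h" using h0 by (simp add: pos_le_divide_eq)
  then have epos: "e > 0" using c1 h0 by (smt (verit) mult_pos_pos)
  have eh2: "e * ln 2 \<ge> (1 - ln 2) * h"
  proof -
    have "e * ln 2 \<ge> (1/ln 2 - 1)*h*ln 2" using eh l0 by (intro mult_right_mono) auto
    also have "(1/ln 2 - 1)*h*ln 2 = (1 - ln 2)*h" using l0 by (simp add: field_simps)
    finally show ?thesis .
  qed
  define hh where "hh = max h e"
  have hh0: "hh > 0" and hhe: "hh \<ge> e" and hhh: "hh \<ge> h" unfolding hh_def using h0 by auto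
  have hp: "hh*(p+1) \<ge> a^2"
  proof -
    have "h*(p+1) = a^2" unfolding h_def using p0 by simp
    moreover have "h*(p+1) \<le> hh*(p+1)" using hhh p0 by (intro mult_right_mono) auto
    ultimately show ?thesis by simp
  qed
  have a1: "a \<ge> 1" using epos unfolding e_def by simp
  have KB: "Kc a p n \<ge> Bs e hh n" for n
    using K_ge_B[OF a1 p0 hh0 _ hp] hhe unfolding e_def by simp
  define V where "V = 2 + e*(2*ln 2) - hh*(2 - 2*ln 2)"
  have Bsums: "(\<lambda>n. Bs e hh n * (1/2)^n) sums V"
  proof -
    have s: "(\<lambda>n. (1/2::real)^n + e*(Hn n * (1/2)^n) - hh*(real n * (1/2)^n - Hn n * (1/2)^n)) sums V"
      unfolding V_def
      by (intro sums_diff sums_add sums_mult geo_half Hn_sums n_sums)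
    have "(\<lambda>n. Bs e hh n * (1/2::real)^n) = (\<lambda>n. (1/2::real)^n + e*(Hn n * (1/2)^n) - hh*(real n * (1/2)^n - Hn n * (1/2)^n))"
      by (rule ext) (simp add: Bs_def algebra_simps)
    then show ?thesis using s by simp
  qed
  have V2: "V \<ge> 2"
  proof (cases "h \<le> e")
    case True
    then have "hh = e" unfolding hh_def by simp
    then have "V = 2 + e*(4*ln 2 - 2)" unfolding V_def by (simp add: algebra_simps)
    moreover have "e*(4*ln 2 - 2) \<ge> 0" using epos ln2_lower by simp
    ultimately show ?thesis by simp
  next
    case False
    then have "hh = h" unfolding hh_def by simp
    then have "V = 2 + 2*(e*ln 2 - (1 - ln 2)*h)" unfolding V_def by (simp add: algebra_simps)
    then show ?thesis using eh2 by simp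
  qed
  have Ksum: "summable (\<lambda>n. Kc a p n * (1/2)^n)" using Kc_summable[OF a0 p0] by simp
  have diffsum: "(\<lambda>n. Kc a p n * (1/2)^n - Bs e hh n * (1/2)^n) sums (FF a p (1/2) - V)"
    unfolding FF_def by (intro sums_diff summable_sums Ksum Bsums)
  have K2v: "Kc a p 2 - Bs e hh 2 = (e^2 + hh - h)/2"
  proof -
    have "Kc a p 2 = a*(1 + a*p/(p+1))/2" using p0 by (simp add: numeral_2_eq_2)
    moreover have "Bs e hh 2 = 1 + e*(3/2) - hh/2" by (simp add: Bs_def Hn_def numeral_2_eq_2)
    moreover have "a*(a*p/(p+1)) = a^2 - h" unfolding h_def using p0 by (simp add: field_simps power2_eq_square)
    ultimately show ?thesis unfolding e_def by (simp add: field_simps power2_eq_square)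
  qed
  have "0 < (\<Sum>n. Kc a p n * (1/2)^n - Bs e hh n * (1/2)^n)"
  proof (rule suminf_pos2[where i=2])
    show "summable (\<lambda>n. Kc a p n * (1/2::real)^n - Bs e hh n * (1/2)^n)" using diffsum by (rule sums_summable)
    fix n show "0 \<le> Kc a p n * (1/2::real)^n - Bs e hh n * (1/2)^n"
      using KB[of n] by (simp add: algebra_simps)
  next
    have "e^2 > 0" using epos by simp
    then have "e^2 + hh - h > 0" using hhh by linarith
    then have "Kc a p 2 - Bs e hh 2 > 0" unfolding K2v by simp
    then show "0 < Kc a p 2 * (1/2::real)^2 - Bs e hh 2 * (1/2)^2" by (simp add: algebra_simps)
  qed
  then have "FF a p (1/2) - V > 0" using diffsum by (simp add: sums_iff)
  then show ?thesis using V2 unfolding a_def p_def by simp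
qed



lemma Kc_mono_param:
  assumes "0 < a" "a \<le> a'" "0 < p" "p \<le> p'"
  shows "Kc a p n \<le> Kc a' p' n"
proof (induction n)
  case 0 then show ?case by simp
next
  case (Suc n)
  have q: "p/(p + real n) \<le> p'/(p' + real n)"
    using assms by (simp add: field_simps mult_right_mono)
  have "a*(p/(p + real n)) \<le> a'*(p'/(p' + real n))"
    using assms q by (intro mult_mono) auto
  then have "(real n + a*p/(p + real n)) / (real n + 1) \<le> (real n + a'*p'/(p' + real n)) / (real n + 1)"
    by (intro divide_right_mono) auto
  moreover have "(real n + a*p/(p + real n)) / (real n + 1) \<ge> 0" using assms by simp
  moreover have "Kc a p n \<ge> 0" using Kc_pos assms by (simp add: less_imp_le)
  ultimately have "Kc a p n * ((real n + a*p/(p + real n)) / (real n + 1))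
      \<le> Kc a' p' n * ((real n + a'*p'/(p' + real n)) / (real n + 1))"
    using Suc by (intro mult_mono) auto
  then show ?case by simp
qed

lemma tail_strict:
  fixes f :: "nat \<Rightarrow> real"
  assumes nn: "\<And>n. f n \<ge> 0" and dec: "\<And>n. n \<ge> N \<Longrightarrow> f (Suc n) \<le> f n"
    and sd: "f (Suc N) < f N" and sm: "summable (\<lambda>n. f n * (1/2)^n)"
  shows "(\<Sum>n. f n * (1/2)^n) < (\<Sum>n<N. f n * (1/2)^n) + f N * (1/2)^N * 2"
proof -
  have le: "f (n + N) \<le> f N" for n
  proof (induction n)
    case 0 then show ?case by simp
  next
    case (Suc n)
    have "f (Suc (n + N)) \<le> f (n + N)" by (rule dec) simp
    then show ?case using Suc by simp
  qed
  have split: "(\<Sum>n. f n * (1/2)^n) = (\<Sum>n. f (n + N) * (1/2)^(n + N)) + (\<Sum>n<N. f n * (1/2)^n)"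
    by (rule suminf_split_initial_segment[OF sm])
  have s1: "(\<lambda>n. f (n + N) * (1/2::real)^(n + N)) sums (\<Sum>n. f (n + N) * (1/2)^(n + N))"
    using summable_ignore_initial_segment[OF sm, of N] by (simp add: summable_sums)
  have s2: "(\<lambda>n. f N * (1/2)^N * (1/2::real)^n) sums (f N * (1/2)^N * 2)"
    using sums_mult[OF geo_half, of "f N * (1/2)^N"] by simp
  have ds: "(\<lambda>n. f N * (1/2)^N * (1/2::real)^n - f (n + N) * (1/2)^(n + N)) sums
      (f N * (1/2)^N * 2 - (\<Sum>n. f (n + N) * (1/2)^(n + N)))"
    by (rule sums_diff[OF s2 s1])
  have "0 < (\<Sum>n. f N * (1/2)^N * (1/2::real)^n - f (n + N) * (1/2)^(n + N))"
  proof (rule suminf_pos2[where i=1])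
    show "summable (\<lambda>n. f N * (1/2)^N * (1/2::real)^n - f (n + N) * (1/2)^(n + N))"
      using ds by (rule sums_summable)
    fix n
    have "f (n + N) * (1/2::real)^(n + N) \<le> f N * (1/2)^(n+N)" using le by (intro mult_right_mono) auto
    then show "0 \<le> f N * (1/2)^N * (1/2::real)^n - f (n + N) * (1/2)^(n + N)"
      by (simp add: power_add algebra_simps)
  next
    have "f (1 + N) * (1/2::real)^(1 + N) < f N * (1/2)^(1+N)" using sd by (intro mult_strict_right_mono) auto
    then show "0 < f N * (1/2)^N * (1/2::real)^1 - f (1 + N) * (1/2)^(1 + N)"
      by (simp add: power_add algebra_simps)
  qed
  then have "(\<Sum>n. f (n + N) * (1/2)^(n + N)) < f N * (1/2)^N * 2" using ds by (simp add: sums_iff)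
  then show ?thesis unfolding split by simp
qed

definition T8 :: "real \<Rightarrow> real \<Rightarrow> real" where
  "T8 a p = (\<Sum>n<8. Kc a p n * (1/2)^n) + Kc a p 8 * (1/2)^8 * 2"

lemma T8_mono: assumes "0 < a" "a \<le> a'" "0 < p" "p \<le> p'" shows "T8 a p \<le> T8 a' p'"
  unfolding T8_def using Kc_mono_param[OF assms]
  by (intro add_mono sum_mono mult_right_mono) auto

lemma cell1: "T8 (1019/1000) 20 < 2" unfolding T8_def by (simp add: eval_nat_numeral field_simps)
lemma cell2: "T8 (1027/1000) (362/25) < 2" unfolding T8_def by (simp add: eval_nat_numeral field_simps)
lemma cell3: "T8 (1037/1000) (1011/100) < 2" unfolding T8_def by (simp add: eval_nat_numeral field_simps)
lemma cell4: "T8 (1049/1000) (73/10) < 2" unfolding T8_def by (simp add: eval_nat_numeral field_simps)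
lemma cell5: "T8 (10605/10000) (27/5) < 2" unfolding T8_def by (simp add: eval_nat_numeral field_simps)



lemma stepU:
  fixes e g H m x p U0 U1 :: real
  assumes p0: "p > 0" and x0: "x > 0"
    and U0: "U0 = 1 + e*H - g*m" and U1: "U1 = U0 + (e - x*g)/(x+1)"
    and Q: "x*(1+e+e*H) - e^2*H*p + g*(m*e*p - m*x - x*p - x^2) \<ge> 0"
  shows "U0 * ((x + (1+e)*p/(p+x))/(x+1)) \<le> U1"
proof -
  have px: "p + x > 0" using p0 x0 by simp
  have u1: "(x+1)*U1 = (x+1)*U0 + e - x*g" unfolding U1 using x0 by (simp add: field_simps)
  have fx: "x + (1+e)*p/(p+x) = (x*(p+x) + (1+e)*p)/(p+x)" using px by (simp add: field_simps)
  have ident: "((x+1)*U0 + e - x*g)*(p+x) - (x*(p+x) + (1+e)*p)*U0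
      = x*(1+e+e*H) - e^2*H*p + g*(m*e*p - m*x - x*p - x^2)"
    unfolding U0 by (simp add: algebra_simps power2_eq_square)
  then have main0: "(x*(p+x) + (1+e)*p)*U0 \<le> ((x+1)*U1)*(p+x)" using Q unfolding u1 by linarith
  have "((x+1)*U1)*(p+x) = U1*((p+x)*(x+1))" by (simp add: algebra_simps)
  with main0 have main: "(x*(p+x) + (1+e)*p)*U0 \<le> U1*((p+x)*(x+1))" by simp
  have d: "(p+x)*(x+1) > 0" using px x0 by simp
  have "U0 * ((x + (1+e)*p/(p+x))/(x+1)) = ((x*(p+x) + (1+e)*p)*U0) / ((p+x)*(x+1))"
    unfolding fx by simp
  also have "\<dots> \<le> U1" by (subst pos_divide_le_eq[OF d]) (rule main)
  finally show ?thesis .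
qed

lemma Hn_vals: "Hn 1 = 1" "Hn 2 = 3/2" "Hn 3 = 11/6" "Hn 4 = 25/12" "Hn 5 = 137/60"
  by (simp_all add: Hn_def eval_nat_numeral)

lemma Kc_dec: assumes "a > 0" "p > 0" "(a-1)*p < real n" shows "Kc a p (Suc n) < Kc a p n"
proof -
  have "a*p < p + real n" using assms by (simp add: algebra_simps)
  then have "a*p/(p + real n) < 1" using assms by (simp add: divide_less_eq)
  then have "(real n + a*p/(p + real n)) / (real n + 1) < 1" by (simp add: divide_less_eq)
  moreover have "Kc a p n > 0" using Kc_pos assms by simp
  ultimately have "Kc a p n * ((real n + a*p/(p + real n)) / (real n + 1)) < Kc a p n * 1"
    by (intro mult_strict_left_mono) auto
  then show ?thesis by simp
qed

abbreviation kap :: real where "kap \<equiv> 661/269"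

lemma KU:
  fixes e p :: real
  assumes e0: "e \<ge> 0" and e1: "e \<le> 3/200" and p0: "p > 0"
    and r1: "e*p \<le> 2872/10000"
  shows "n \<le> 5 \<Longrightarrow> Kc (1+e) p n \<le> Bs e (kap*e) n"
proof (induction n)
  case 0 then show ?case by (simp add: Bs_def)
next
  case (Suc n)
  define r where "r = e*p"
  define w where "w = e*r"
  have r0: "r \<ge> 0" unfolding r_def using e0 p0 by simp
  have w0: "w \<ge> 0" unfolding w_def using e0 r0 by simp
  have w1: "w \<le> 2872/10000*e" unfolding w_def r_def using mult_left_mono[OF r1 e0] by (simp add: mult.commute)
  define f where "f = (real n + (1+e)*p/(p + real n)) / (real n + 1)"
  have f0: "f \<ge> 0" unfolding f_def using e0 p0 by simp
  have KS: "Kc (1+e) p (Suc n) = Kc (1+e) p n * f" by (simp add: f_def)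
  show ?case
  proof (cases "n = 0")
    case True then show ?thesis using p0 by (simp add: Bs_def Hn_def)
  next
    case False
    have IH: "Kc (1+e) p n \<le> Bs e (kap*e) n" using Suc by simp
    have Q: "real n*(1+e+e*Hn n) - e^2*Hn n*p + (kap*e)*((real n - Hn n)*e*p - (real n - Hn n)*real n - real n*p - (real n)^2) \<ge> 0"
    proof -
      have eq: "real n*(1+e+e*Hn n) - e^2*Hn n*p + (kap*e)*((real n - Hn n)*e*p - (real n - Hn n)*real n - real n*p - (real n)^2)
         = real n + real n*e + real n*e*Hn n - Hn n*w + kap*((real n - Hn n)*w - (real n - Hn n)*real n*e - real n*r - (real n)^2*e)"
        unfolding w_def r_def by (simp add: algebra_simps power2_eq_square)
      have "n = 1 \<or> n = 2 \<or> n = 3 \<or> n = 4" using False Suc.prems by auto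
      then show ?thesis
      proof (elim disjE)
        assume n: "n = 1"
        have hv: "Hn n = 1" using n Hn_vals by simp
        have rn: "real n = 1" using n by simp
        show ?thesis unfolding eq unfolding hv rn power2_eq_square using e0 e1 r0 r1 w0 w1 unfolding r_def[symmetric] by (simp only: ring_distribs; linarith)
      next
        assume n: "n = 2"
        have hv: "Hn n = 3/2" using n Hn_vals by simp
        have rn: "real n = 2" using n by simp
        show ?thesis unfolding eq unfolding hv rn power2_eq_square using e0 e1 r0 r1 w0 w1 unfolding r_def[symmetric] by (simp only: ring_distribs; linarith)
      next
        assume n: "n = 3"
        have hv: "Hn n = 11/6" using n Hn_vals by simp
        have rn: "real n = 3" using n by simp
        show ?thesis unfolding eq unfolding hv rn power2_eq_square using e0 e1 r0 r1 w0 w1 unfolding r_def[symmetric] by (simp only: ring_distribs; linarith)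
      next
        assume n: "n = 4"
        have hv: "Hn n = 25/12" using n Hn_vals by simp
        have rn: "real n = 4" using n by simp
        show ?thesis unfolding eq unfolding hv rn power2_eq_square using e0 e1 r0 r1 w0 w1 unfolding r_def[symmetric] by (simp only: ring_distribs; linarith)
      qed
    qed
    have "Bs e (kap*e) n * f \<le> Bs e (kap*e) (Suc n)"
      unfolding f_def
      by (rule stepU[OF p0 _ _ Bs_Suc Q]) (use False in \<open>auto simp: Bs_def\<close>)
    moreover have "Kc (1+e) p n * f \<le> Bs e (kap*e) n * f" using IH f0 by (rule mult_right_mono)
    ultimately show ?thesis using KS by simp
  qed
qed



lemma FF_lt_T:
  assumes a0: "a > 0" and p0: "p > 0" and ap: "(a-1)*p < 1" and N1: "N \<ge> 1"
  shows "FF a p (1/2) < (\<Sum>n<N. Kc a p n*(1/2)^n) + Kc a p N*(1/2)^N*2"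
  unfolding FF_def
proof (rule tail_strict)
  fix n show "Kc a p n \<ge> 0" using Kc_pos[OF a0 p0] by (simp add: less_imp_le)
next
  fix n assume "n \<ge> N"
  then have "(a-1)*p < real n" using ap N1 by linarith
  then show "Kc a p (Suc n) \<le> Kc a p n" using Kc_dec[OF a0 p0] by (simp add: less_imp_le)
next
  have "(a-1)*p < real N" using ap N1 by linarith
  then show "Kc a p (Suc N) < Kc a p N" using Kc_dec[OF a0 p0] by simp
next
  show "summable (\<lambda>n. Kc a p n * (1/2)^n)" using Kc_summable[OF a0 p0] by simp
qed

lemma case1_small:
  assumes a0: "a > 0" and a1: "a \<le> 1" and p0: "p > 0"
  shows "FF a p (1/2) < 2"
proof -
  have K1: "Kc a p n \<le> 1" for n
  proof (induction n)
    case 0 then show ?case by simp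
  next
    case (Suc n)
    have "a*p/(p + real n) \<le> 1"
    proof -
      have "a*p \<le> 1*p" using a1 p0 by (intro mult_right_mono) auto
      then have "a*p \<le> p + real n" by simp
      then show ?thesis using p0 by (simp add: divide_le_eq)
    qed
    then have f1: "(real n + a*p/(p + real n)) / (real n + 1) \<le> 1" by (simp add: divide_le_eq)
    have f0: "(real n + a*p/(p + real n)) / (real n + 1) \<ge> 0" using a0 p0 by simp
    have "Kc a p n * ((real n + a*p/(p + real n)) / (real n + 1)) \<le> 1 * 1"
      using Suc f1 f0 Kc_pos[OF a0 p0, of n] by (intro mult_mono) auto
    then show ?case by simp
  qed
  have K2: "Kc a p 2 < 1"
  proof -
    have "(a-1)*p \<le> 0" using a1 p0 by (intro mult_nonpos_nonneg) auto
    then have "(a-1)*p < real (1::nat)" by simp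
    then have "Kc a p (Suc 1) < Kc a p 1" by (rule Kc_dec[OF a0 p0])
    then show ?thesis using K1[of 1] by (simp add: numeral_2_eq_2)
  qed
  have Ksum: "summable (\<lambda>n. Kc a p n * (1/2)^n)" using Kc_summable[OF a0 p0] by simp
  have ds: "(\<lambda>n. (1/2::real)^n - Kc a p n * (1/2)^n) sums (2 - FF a p (1/2))"
    unfolding FF_def by (intro sums_diff geo_half summable_sums Ksum)
  have "0 < (\<Sum>n. (1/2::real)^n - Kc a p n * (1/2)^n)"
  proof (rule suminf_pos2[where i=2])
    show "summable (\<lambda>n. (1/2::real)^n - Kc a p n * (1/2)^n)" using ds by (rule sums_summable)
    fix n show "0 \<le> (1/2::real)^n - Kc a p n * (1/2)^n" using K1[of n]
      by (simp add: mult_left_le_one_le)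
  next
    show "0 < (1/2::real)^2 - Kc a p 2 * (1/2)^2" using K2 by simp
  qed
  then show ?thesis using ds by (simp add: sums_iff)
qed

abbreviation CC :: real where "CC \<equiv> 27875/100000"

lemma cellp:
  assumes "lo \<le> a" "a \<le> hi" "1 < lo" "0 < p" "(a-1)*(p+1) \<le> CC*a^2"
  shows "(lo-1)*(p+1) \<le> CC*hi^2"
proof -
  have "(lo-1)*(p+1) \<le> (a-1)*(p+1)" using assms by (intro mult_right_mono) auto
  moreover have "a^2 \<le> hi^2" using assms by (intro power_mono) auto
  then have "CC*a^2 \<le> CC*hi^2" by simp
  ultimately show ?thesis using assms(5) by linarith
qed

lemma case1_big:
  assumes a1: "a > 1" and p4: "p \<ge> 4*a" and hyp: "(a-1)*(p+1) \<le> CC*a^2"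
  shows "FF a p (1/2) < 2"
proof -
  have a0: "a > 0" and p0: "p > 0" using a1 p4 by auto
  have atop: "a \<le> 10605/10000"
  proof (rule ccontr)
    assume "\<not> a \<le> 10605/10000"
    then have big: "a > 10605/10000" by simp
    have "(a-1)*(4*a+1) \<le> (a-1)*(p+1)" using a1 p4 by (intro mult_left_mono) auto
    then have "(a-1)*(4*a+1) \<le> CC*a^2" using hyp by simp
    then have "(4 - CC)*(a*a) \<le> 3*a + 1" by (simp add: algebra_simps power2_eq_square)
    moreover have "(4 - CC)*(10605/10000*a) \<le> (4 - CC)*(a*a)"
      using big a0 by (intro mult_left_mono mult_right_mono) auto
    ultimately have "(4 - CC)*(10605/10000*a) \<le> 3*a + 1" by linarith
    then show False using big by simp
  qed
  have asq: "a^2 \<le> (10605/10000)^2" using atop a0 by (intro power_mono) auto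
  have ap: "(a-1)*p < 1"
  proof -
    have "(a-1)*p \<le> (a-1)*(p+1)" using a1 by simp
    also have "\<dots> \<le> CC*a^2" by (rule hyp)
    also have "\<dots> \<le> CC*(10605/10000)^2" using asq by simp
    finally show ?thesis by (simp add: power2_eq_square)
  qed
  show ?thesis
  proof (cases "p \<ge> 20")
    case True
    define e where "e = a - 1"
    have ae: "a = 1 + e" unfolding e_def by simp
    have e0: "e \<ge> 0" unfolding e_def using a1 by simp
    have "21*e \<le> e*(p+1)" using True e0 by (simp add: mult_left_mono mult.commute)
    also have "e*(p+1) \<le> CC*(10605/10000)^2" using hyp asq unfolding e_def by simp
    finally have e1: "e \<le> 3/200" by (simp add: power2_eq_square)
    have "a^2 \<le> (203/200)^2" using e1 a0 unfolding ae by (intro power_mono) auto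
    then have c2: "CC*a^2 \<le> CC*(203/200)^2" by simp
    have "e*p \<le> e*(p+1)" using e0 by (simp add: distrib_left)
    also have "\<dots> \<le> CC*a^2" using hyp unfolding e_def .
    also have "\<dots> \<le> CC*(203/200)^2" by (rule c2)
    finally have r1: "e*p \<le> 2872/10000" by (simp add: power2_eq_square)
    have KU5: "\<And>n. n \<le> 5 \<Longrightarrow> Kc a p n \<le> Bs e (kap*e) n"
      unfolding ae using KU[OF e0 e1 p0 r1] by simp
    have "FF a p (1/2) < (\<Sum>n<5. Kc a p n*(1/2)^n) + Kc a p 5*(1/2)^5*2"
      by (rule FF_lt_T[OF a0 p0 ap]) simp
    also have "\<dots> \<le> (\<Sum>n<5. Bs e (kap*e) n*(1/2)^n) + Bs e (kap*e) 5*(1/2)^5*2"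
      using KU5 by (intro add_mono sum_mono mult_right_mono) auto
    also have "\<dots> = 2" by (simp add: Bs_def Hn_def eval_nat_numeral field_simps)
    finally show ?thesis .
  next
    case False
    then have p20: "p \<le> 20" by simp
    have FT: "FF a p (1/2) < T8 a p" unfolding T8_def by (rule FF_lt_T[OF a0 p0 ap]) simp
    have "T8 a p < 2"
    proof -
      consider "a \<le> 1019/1000" | "1019/1000 \<le> a" "a \<le> 1027/1000" | "1027/1000 \<le> a" "a \<le> 1037/1000"
        | "1037/1000 \<le> a" "a \<le> 1049/1000" | "1049/1000 \<le> a" "a \<le> 10605/10000"
        using atop by linarith
      then show ?thesis
      proof cases
        case 1
        have "T8 a p \<le> T8 (1019/1000) 20" using 1 a0 p0 p20 by (intro T8_mono) auto
        then show ?thesis using cell1 by simp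
      next
        case 2
        have "(1019/1000-1)*(p+1) \<le> CC*(1027/1000)^2" using cellp[OF 2 _ p0 hyp] by simp
        then have "p \<le> 362/25" by (simp add: power2_eq_square)
        then have "T8 a p \<le> T8 (1027/1000) (362/25)" using 2 a0 p0 by (intro T8_mono) auto
        then show ?thesis using cell2 by simp
      next
        case 3
        have "(1027/1000-1)*(p+1) \<le> CC*(1037/1000)^2" using cellp[OF 3 _ p0 hyp] by simp
        then have "p \<le> 1011/100" by (simp add: power2_eq_square)
        then have "T8 a p \<le> T8 (1037/1000) (1011/100)" using 3 a0 p0 by (intro T8_mono) auto
        then show ?thesis using cell3 by simp
      next
        case 4
        have "(1037/1000-1)*(p+1) \<le> CC*(1049/1000)^2" using cellp[OF 4 _ p0 hyp] by simp
        then have "p \<le> 73/10" by (simp add: power2_eq_square)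
        then have "T8 a p \<le> T8 (1049/1000) (73/10)" using 4 a0 p0 by (intro T8_mono) auto
        then show ?thesis using cell4 by simp
      next
        case 5
        have "(1049/1000-1)*(p+1) \<le> CC*(10605/10000)^2" using cellp[OF 5 _ p0 hyp] by simp
        then have "p \<le> 27/5" by (simp add: power2_eq_square)
        then have "T8 a p \<le> T8 (10605/10000) (27/5)" using 5 a0 p0 by (intro T8_mono) auto
        then show ?thesis using cell5 by simp
      qed
    qed
    then show ?thesis using FT by simp
  qed
qed



theorem mainTheorem6:
  fixes c d a b \<beta> :: real
  assumes "c > 0" and "d > 0"
    and "0 < a" and "a < 1" and "1 < b"
    and "\<beta> \<in> {0<..<1}" and "beta_eq c d a b \<beta>"
    and "\<forall>x\<in>{0<..<1}. beta_eq c d a b x \<longrightarrow> x = \<beta>"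
  shows "let a0 = c * d / (c + d); h = a0^2 / (c + d + 1);
             c0 = 1 - 1 / (2 * ln 2); c1 = 1 / ln 2 - 1
         in ((a0 - 1) / h \<le> c0 \<longrightarrow> \<beta> > 1/2) \<and> ((a0 - 1) / h \<ge> c1 \<longrightarrow> \<beta> < 1/2)"
proof -
  define a0 where "a0 = c * d / (c + d)"
  define p where "p = c + d"
  define h where "h = a0^2 / (c + d + 1)"
  have c0: "c > 0" and d0: "d > 0" using assms by auto
  have b0: "0 < b" using assms by simp
  have a00: "a0 > 0" and p0: "p > 0" unfolding a0_def p_def using c0 d0 by auto
  have h0: "h > 0" unfolding h_def using a00 c0 d0 by simp
  have P1: "(a0 - 1) / h \<le> 1 - 1 / (2 * ln 2) \<longrightarrow> \<beta> > 1/2"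
  proof
    assume hyp: "(a0 - 1) / h \<le> 1 - 1 / (2 * ln 2)"
    have F: "FF a0 p (1/2) < 2"
    proof (cases "a0 \<le> 1")
      case True
      then show ?thesis using case1_small a00 p0 by simp
    next
      case False
      have l0: "ln (2::real) > 0" by simp
      have cc: "1 - 1 / (2 * ln 2) \<le> CC"
      proof -
        have "(1 - CC) * (2 * ln 2) \<le> 1" using ln2_upper by simp
        then have "1 - CC \<le> 1 / (2 * ln 2)" using l0 by (simp add: le_divide_eq)
        then show ?thesis by simp
      qed
      have "a0 - 1 \<le> (1 - 1 / (2 * ln 2)) * h" using hyp h0 by (simp add: divide_le_eq)
      also have "\<dots> \<le> CC * h" using cc h0 by (intro mult_right_mono) auto
      finally have "(a0 - 1) * (p+1) \<le> CC * h * (p+1)" using p0 by (intro mult_right_mono) auto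
      also have "CC * h * (p+1) = CC * a0^2"
      proof -
        have "c+d+1 \<noteq> 0" using c0 d0 by simp
        then have "h*(p+1) = a0^2" unfolding h_def p_def by simp
        then show ?thesis by (simp add: mult.assoc)
      qed
      finally have hyp2: "(a0 - 1) * (p+1) \<le> CC * a0^2" .
      have p4: "p \<ge> 4*a0"
      proof -
        have "(c+d)^2 - 4*(c*d) = (c-d)^2" by (simp add: power2_eq_square algebra_simps)
        moreover have "(c-d)^2 \<ge> 0" by simp
        ultimately have "4*(c*d) \<le> (c+d)^2" by linarith
        then have "4*(c*d)/(c+d) \<le> (c+d)" using p0 unfolding p_def by (simp add: divide_le_eq power2_eq_square)
        then show ?thesis unfolding a0_def p_def by simp
      qed
      show ?thesis by (rule case1_big) (use False p4 hyp2 in auto)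
    qed
    show "\<beta> > 1/2"
      by (rule reduce1[OF c0 d0 assms(3) b0 assms(6) assms(7)]) (use F in \<open>simp add: a0_def p_def\<close>)
  qed
  have P2: "(a0 - 1) / h \<ge> 1 / ln 2 - 1 \<longrightarrow> \<beta> < 1/2"
  proof
    assume hyp: "(a0 - 1) / h \<ge> 1 / ln 2 - 1"
    have F: "FF a0 p (1/2) > 2"
      using case2[OF c0 d0] hyp unfolding a0_def p_def h_def by simp
    show "\<beta> < 1/2"
      by (rule reduce2[OF c0 d0 assms(3) b0 assms(6) assms(7)]) (use F in \<open>simp add: a0_def p_def\<close>)
  qed
  show ?thesis unfolding Let_def using P1 P2 unfolding a0_def h_def by simp
qed


end
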